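(* Let $\mathit{GF}(q)$ be a finite field with $q=p^n$, $p$ prime. If $F_{q,\phi}$ and $F_{q,\phi}^{\dagger}$ can be performed for some nonzero $\mathit{GF}(p)$-linear map $\phi:\mathit{GF}(q)\to\mathit{GF}(p)$, then there is a quantum algorithm making a single query to the black box that solves the quantum hidden linear structure problem over $\mathit{GF}(q)$ exactly (i.e. outputs $s$ with probability $1$).
   Context: $F_{q,\phi}$ is the unitary on the space with orthonormal basis $\{\ket{x}:x\in\mathit{GF}(q)\}$ defined by $F_{q,\phi}\ket{x}=\frac{1}{\sqrt q}\sum_{y\in \mathit{GF}(q)}\omega^{\phi(xy)}\ket{y}$, $\omega=e^{2\pi i/p}$ (elements of $\mathit{GF}(p)$ in the exponent identified with integers $0,\dots,p-1$; $\mathit{GF}(q)$ viewed as an $n$-dimensional vector space over $\mathit{GF}(p)$). The quantum hidden linear structure problem over $\mathit{GF}(q)$: one is given a black box performing the unitary $\ket{x}\ket{y}\mapsto\ket{x}\ket{\pi(y+sx)}$ on two $\mathit{GF}(q)$-valued registers, where $\pi$ is an unknown permutation of $\mathit{GF}(q)$ and $s\in\mathit{GF}(q)$ is unknown; the goal is to determine $s$. *)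

theory Defs
  imports "HOL-Analysis.Analysis"
begin

text \<open>GF(q) is modelled by an arbitrary finite field type 'a; its characteristic
  p = CHAR('a) is prime and q = CARD('a) = p^n automatically.
  GF(p) is the prime subfield of 'a.\<close>

definition prime_subfield :: "'a::field set" where
  "prime_subfield = range of_nat"

text \<open>Identification of an element of GF(p) with an integer in 0..p-1.\<close>
definition gfp_val :: "'a::field \<Rightarrow> nat" where
  "gfp_val c = (LEAST k. of_nat k = c)"

definition gfp_linear_functional :: "('a::field \<Rightarrow> 'a) \<Rightarrow> bool" where
  "gfp_linear_functional \<phi> \<longleftrightarrow>
     (\<forall>x. \<phi> x \<in> prime_subfield) \<and>
     (\<forall>x y. \<phi> (x + y) = \<phi> x + \<phi> y) \<and>
     (\<forall>c\<in>prime_subfield. \<forall>x. \<phi> (c * x) = c * \<phi> x)"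

definition omega_pow :: "'a::field itself \<Rightarrow> nat \<Rightarrow> complex" where
  "omega_pow _ k = cis (2 * pi * real k / real CHAR('a))"

text \<open>Matrix entry <y| F_{q,phi} |x> = omega^{phi(xy)} / sqrt q.\<close>
definition F_entry :: "('a::{finite,field} \<Rightarrow> 'a) \<Rightarrow> 'a \<Rightarrow> 'a \<Rightarrow> complex" where
  "F_entry \<phi> y x = omega_pow TYPE('a) (gfp_val (\<phi> (x * y))) / complex_of_real (sqrt (real CARD('a)))"

text \<open>Two-register states: amplitude functions on GF(q) x GF(q).\<close>
type_synonym 'a state = "'a \<times> 'a \<Rightarrow> complex"

definition basis_state :: "'a \<times> 'a \<Rightarrow> 'a state" where
  "basis_state z = (\<lambda>w. if w = z then 1 else 0)"

text \<open>Gates available to the algorithm: F_{q,phi} and its adjoint on either register,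
  and classical reversible gates (permutations of the computational basis).\<close>
datatype 'a gate = F_reg1 | Fdag_reg1 | F_reg2 | Fdag_reg2 | Perm "'a \<times> 'a \<Rightarrow> 'a \<times> 'a"

definition apply_perm :: "('a \<times> 'a \<Rightarrow> 'a \<times> 'a) \<Rightarrow> 'a state \<Rightarrow> 'a state" where
  "apply_perm g v = (\<lambda>z. v (inv g z))"

fun apply_gate :: "('a::{finite,field} \<Rightarrow> 'a) \<Rightarrow> 'a gate \<Rightarrow> 'a state \<Rightarrow> 'a state" where
  "apply_gate \<phi> F_reg1 v = (\<lambda>(a, b). \<Sum>x\<in>UNIV. F_entry \<phi> a x * v (x, b))"
| "apply_gate \<phi> Fdag_reg1 v = (\<lambda>(a, b). \<Sum>x\<in>UNIV. cnj (F_entry \<phi> x a) * v (x, b))"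
| "apply_gate \<phi> F_reg2 v = (\<lambda>(a, b). \<Sum>y\<in>UNIV. F_entry \<phi> b y * v (a, y))"
| "apply_gate \<phi> Fdag_reg2 v = (\<lambda>(a, b). \<Sum>y\<in>UNIV. cnj (F_entry \<phi> y b) * v (a, y))"
| "apply_gate \<phi> (Perm g) v = apply_perm g v"

definition run_circuit :: "('a::{finite,field} \<Rightarrow> 'a) \<Rightarrow> 'a gate list \<Rightarrow> 'a state \<Rightarrow> 'a state" where
  "run_circuit \<phi> gs v = fold (apply_gate \<phi>) gs v"

definition valid_gate :: "'a gate \<Rightarrow> bool" where
  "valid_gate g = (case g of Perm f \<Rightarrow> bij f | _ \<Rightarrow> True)"

definition black_box :: "('a::field \<Rightarrow> 'a) \<Rightarrow> 'a \<Rightarrow> 'a state \<Rightarrow> 'a state" where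
  "black_box \<pi> s = apply_perm (\<lambda>(x, y). (x, \<pi> (y + s * x)))"

text \<open>A single-query algorithm: start in a computational basis state, apply a circuit,
  query the black box once, apply another circuit, measure both registers in the
  computational basis and classically post-process the outcome.\<close>
definition solves_HLS_exactly_one_query ::
  "('a::{finite,field} \<Rightarrow> 'a) \<Rightarrow> 'a \<times> 'a \<Rightarrow> 'a gate list \<Rightarrow> 'a gate list \<Rightarrow> ('a \<times> 'a \<Rightarrow> 'a) \<Rightarrow> bool" where
  "solves_HLS_exactly_one_query \<phi> init pre post out \<longleftrightarrow>
     (\<forall>g\<in>set pre \<union> set post. valid_gate g) \<and>
     (\<forall>\<pi> s. bij \<pi> \<longrightarrow>
        (let final = run_circuit \<phi> post (black_box \<pi> s (run_circuit \<phi> pre (basis_state init)))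
         in (\<Sum>z\<in>{z. out z = s}. (cmod (final z))\<^sup>2) = 1))"

end

theory Submission imports Defs "HOL-Number_Theory.Cong" begin

definition Ev :: "'a::{finite,field} \<Rightarrow> complex" where
  "Ev c = omega_pow TYPE('a) (gfp_val c)"

lemma CHAR_pos_fin: "CHAR('a::{finite,field}) > 0"
  by (rule finite_imp_CHAR_pos) simp

lemma gfp_val_of_nat: "gfp_val (of_nat k :: 'a::{finite,field}) = k mod CHAR('a)"
  unfolding gfp_val_def
proof (rule Least_equality)
  show "of_nat (k mod CHAR('a)) = (of_nat k :: 'a)"
    by (simp add: of_nat_eq_iff_cong_CHAR cong_def)
next
  fix y assume "of_nat y = (of_nat k :: 'a)"
  then have "y mod CHAR('a) = k mod CHAR('a)" by (simp add: of_nat_eq_iff_cong_CHAR cong_def)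
  then show "k mod CHAR('a) \<le> y" by (metis mod_less_eq_dividend)
qed

lemma omega_pow_eq: "omega_pow TYPE('a::{finite,field}) k = cis (2 * pi / real CHAR('a)) ^ k"
proof -
  have "cis (2 * pi / real CHAR('a)) ^ k = cis (real k * (2 * pi / real CHAR('a)))" by (rule Complex.DeMoivre)
  moreover have "real k * (2 * pi / real CHAR('a)) = 2 * pi * real k / real CHAR('a)" by simp
  ultimately show ?thesis by (simp only: omega_pow_def)
qed

lemma omega_pow_mod: "omega_pow TYPE('a::{finite,field}) (k mod CHAR('a)) = omega_pow TYPE('a) k"
proof -
  let ?w = "cis (2 * pi / real CHAR('a))"
  have p: "?w ^ CHAR('a) = 1" proof -
    have "real CHAR('a) * (2 * pi / real CHAR('a)) = 2 * pi" using CHAR_pos_fin[where 'a='a] by simp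
    then show ?thesis by (simp add: Complex.DeMoivre)
  qed
  have "?w ^ k = ?w ^ (CHAR('a) * (k div CHAR('a)) + k mod CHAR('a))" by simp
  also have "\<dots> = (?w ^ CHAR('a)) ^ (k div CHAR('a)) * ?w ^ (k mod CHAR('a))" by (simp only: power_add power_mult)
  also have "\<dots> = ?w ^ (k mod CHAR('a))" by (simp only: p power_one mult_1)
  finally show ?thesis by (simp add: omega_pow_eq)
qed

lemma Ev_of_nat: "Ev (of_nat k :: 'a::{finite,field}) = omega_pow TYPE('a) k"
  by (simp add: Ev_def gfp_val_of_nat omega_pow_mod)

lemma Ev_add: "c \<in> prime_subfield \<Longrightarrow> d \<in> prime_subfield \<Longrightarrow> Ev (c + d :: 'a::{finite,field}) = Ev c * Ev d"
  unfolding prime_subfield_def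
  by (auto simp: Ev_of_nat omega_pow_eq power_add simp flip: of_nat_add)

lemma Ev_norm: "cmod (Ev (c::'a::{finite,field})) = 1"
  by (simp add: Ev_def omega_pow_def)

lemma Ev_zero: "Ev (0::'a::{finite,field}) = 1"
  using Ev_of_nat[of 0, where 'a='a] by (simp add: omega_pow_def)

lemma Ev_one_iff: assumes "c \<in> prime_subfield" "Ev (c::'a::{finite,field}) = 1" shows "c = 0"
proof -
  obtain k where k: "c = of_nat k" using assms(1) unfolding prime_subfield_def by auto
  let ?p = "CHAR('a)"
  have pp: "real ?p > 0" using CHAR_pos_fin[where 'a='a] by simp
  have "cis (2 * pi * real (k mod ?p) / real ?p) = 1"
    using assms(2) by (simp add: k Ev_def gfp_val_of_nat omega_pow_def)
  then have "cos (2 * pi * real (k mod ?p) / real ?p) = 1" by (metis cis.sel(1) one_complex.sel(1))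
  then obtain n :: int where n: "2 * pi * real (k mod ?p) / real ?p = n * 2 * pi"
    by (auto simp: cos_one_2pi_int)
  then have "real (k mod ?p) = n * real ?p" using pp by (simp add: field_simps)
  then have e: "int (k mod ?p) = n * int ?p" by (metis of_int_eq_iff of_int_mult of_int_of_nat_eq)
  have "k mod ?p < ?p" using CHAR_pos_fin[where 'a='a] by simp
  with e have "k mod ?p = 0"
    by (smt (verit, best) mult_less_cancel_right2 mult_nonneg_nonneg of_nat_0_le_iff of_nat_less_iff mult_le_0_iff zero_less_mult_iff int_ops(1) of_nat_eq_0_iff)
  then show ?thesis using k of_nat_eq_iff_cong_CHAR[of k 0, where 'a='a] by (simp add: cong_def)
qed


lemma F_entry_Ev: "F_entry (\<phi> :: 'a::{finite,field} \<Rightarrow> 'a) y x = Ev (\<phi> (x * y)) / complex_of_real (sqrt (real CARD('a::{finite,field})))"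
  by (simp add: F_entry_def Ev_def)

lemma sum_delta_mult: "(\<Sum>x\<in>(UNIV::'b::finite set). f x * (if x = a then c else 0)) = (f a * c :: complex)"
proof -
  have "(\<Sum>x\<in>(UNIV::'b set). f x * (if x = a then c else 0)) = (\<Sum>x\<in>UNIV. if x = a then f a * c else 0)"
    by (rule sum.cong) auto
  then show ?thesis by simp
qed

context
  fixes \<phi> :: "'a::{finite,field} \<Rightarrow> 'a"
  assumes L: "gfp_linear_functional \<phi>"
begin

lemma phi_in: "\<phi> x \<in> prime_subfield" using L by (simp add: gfp_linear_functional_def)
lemma phi_add: "\<phi> (x + y) = \<phi> x + \<phi> y" using L by (simp add: gfp_linear_functional_def)
lemma phi_0: "\<phi> 0 = 0" using phi_add[of 0 0] by (metis add_0 add_cancel_right_right)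

lemma Evp_add: "Ev (\<phi> (x + y)) = Ev (\<phi> x) * Ev (\<phi> y)"
  by (simp add: phi_add Ev_add phi_in)

lemma cnj_unit: "cmod z = 1 \<Longrightarrow> cnj z * z = 1"
  by (metis complex_norm_square mult.commute of_real_1 power_one)

lemma Evp_minus: "Ev (\<phi> (- x)) = cnj (Ev (\<phi> x))"
proof -
  have a: "Ev (\<phi> (- x)) * Ev (\<phi> x) = 1" using Evp_add[of "-x" x] by (simp add: phi_0 Ev_zero)
  have b: "cnj (Ev (\<phi> x)) * Ev (\<phi> x) = 1" by (rule cnj_unit) (rule Ev_norm)
  have "Ev (\<phi> x) \<noteq> 0" using b by auto
  with a b show ?thesis by (metis mult_right_cancel)
qed

lemma char_sum:
  assumes nz: "\<exists>x. \<phi> x \<noteq> 0" and c: "c \<noteq> 0"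
  shows "(\<Sum>x\<in>UNIV. Ev (\<phi> (c * x))) = 0"
proof -
  obtain x0 where x0: "\<phi> x0 \<noteq> 0" using nz by auto
  define x1 where "x1 = x0 / c"
  have cx1: "c * x1 = x0" using c by (simp add: x1_def)
  have E0: "Ev (\<phi> x0) \<noteq> 1" using Ev_one_iff[OF phi_in] x0 by blast
  let ?S = "(\<Sum>x\<in>UNIV. Ev (\<phi> (c * x)))"
  have bij: "bij_betw (\<lambda>x. x + x1) UNIV UNIV"
    by (rule bij_betwI[where g="\<lambda>x. x - x1"]) auto
  have "?S = (\<Sum>x\<in>UNIV. Ev (\<phi> (c * (x + x1))))"
    using sum.reindex_bij_betw[OF bij, of "\<lambda>x. Ev (\<phi> (c * x))"] by simp
  also have "\<dots> = (\<Sum>x\<in>UNIV. Ev (\<phi> (c * x)) * Ev (\<phi> x0))"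
    by (simp add: distrib_left cx1 Evp_add)
  also have "\<dots> = ?S * Ev (\<phi> x0)" by (simp add: sum_distrib_right)
  finally have "?S * (Ev (\<phi> x0) - 1) = 0" by (simp add: algebra_simps)
  with E0 show ?thesis by simp
qed

end

theorem theorem4:
  fixes \<phi> :: "'a::{finite,field} \<Rightarrow> 'a"
  assumes "gfp_linear_functional \<phi>"
    and "\<exists>x. \<phi> x \<noteq> 0"
  shows "\<exists>init pre post out. solves_HLS_exactly_one_query \<phi> init pre post out"
proof (intro exI)
  note L = assms(1)
  define q where "q = CARD('a)"
  define r where "r = complex_of_real (sqrt (real q))"
  have qpos: "q > 0" by (simp add: q_def)
  have rr0: "sqrt (real q) * sqrt (real q) = real q" by simp
  have rr: "r * r = of_nat q" unfolding r_def of_real_mult[symmetric] rr0 by simp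
  have cr: "cnj r = r" by (simp add: r_def)
  have rnz: "r \<noteq> 0" using qpos by (simp add: r_def)
  have Fe: "\<And>y x. F_entry \<phi> y x = Ev (\<phi> (x * y)) / r" by (simp add: F_entry_Ev r_def q_def)
  show "solves_HLS_exactly_one_query \<phi> (0, 1) [F_reg1, Fdag_reg2] [Fdag_reg1] fst"
    unfolding solves_HLS_exactly_one_query_def
  proof (intro conjI allI impI)
    show "\<forall>g\<in>set [F_reg1, Fdag_reg2] \<union> set [Fdag_reg1]. valid_gate (g :: 'a gate)"
      by (auto simp: valid_gate_def)
    fix \<pi> :: "'a \<Rightarrow> 'a" and s :: 'a
    assume bp: "bij \<pi>"
    define V1 where "V1 = apply_gate \<phi> F_reg1 (basis_state (0, 1))"
    define V2 where "V2 = apply_gate \<phi> Fdag_reg2 V1"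
    define V3 where "V3 = black_box \<pi> s V2"
    define V4 where "V4 = apply_gate \<phi> Fdag_reg1 V3"
    have v1: "V1 (a, b) = (if b = 1 then 1 / r else 0)" for a b
    proof -
      have "V1 (a, b) = (\<Sum>x\<in>UNIV. F_entry \<phi> a x * (if x = 0 then (if b = 1 then 1 else 0) else 0))"
        unfolding V1_def by (auto simp: basis_state_def intro!: sum.cong)
      also have "\<dots> = F_entry \<phi> a 0 * (if b = 1 then 1 else 0)" by (rule sum_delta_mult)
      finally show ?thesis by (simp add: Fe phi_0[OF L] Ev_zero)
    qed
    have v2: "V2 (a, b) = cnj (Ev (\<phi> b)) / of_nat q" for a b
    proof -
      have "V2 (a, b) = (\<Sum>y\<in>UNIV. cnj (F_entry \<phi> y b) * (if y = 1 then 1 / r else 0))"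
        unfolding V2_def by (auto simp: v1 intro!: sum.cong)
      also have "\<dots> = cnj (F_entry \<phi> 1 b) * (1 / r)" by (rule sum_delta_mult)
      finally show ?thesis by (simp add: Fe cr flip: rr)
    qed
    define g where "g = (\<lambda>(x, y). (x, \<pi> (y + s * x)))"
    have injg: "inj g"
    proof (rule injI)
      fix u v assume "g u = g v"
      then show "u = v" using bij_is_inj[OF bp] unfolding g_def
        by (cases u; cases v) (auto dest: injD)
    qed
    have invg: "inv g (a, b) = (a, inv \<pi> b - s * a)" for a b
      by (rule inv_f_eq[OF injg]) (simp add: g_def bij_inv_eq_iff[OF bp] surj_f_inv_f[OF bij_is_surj[OF bp]])
    have v3: "V3 (a, b) = cnj (Ev (\<phi> (inv \<pi> b))) * Ev (\<phi> (s * a)) / of_nat q" for a b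
    proof -
      have E: "Ev (\<phi> (inv \<pi> b - s * a)) = Ev (\<phi> (inv \<pi> b)) * cnj (Ev (\<phi> (s * a)))"
        using Evp_add[OF L, of "inv \<pi> b" "-(s*a)"] Evp_minus[OF L, of "s*a"] by simp
      have "V3 (a, b) = V2 (a, inv \<pi> b - s * a)"
        unfolding V3_def black_box_def apply_perm_def g_def[symmetric] invg by simp
      also have "\<dots> = cnj (Ev (\<phi> (inv \<pi> b)) * cnj (Ev (\<phi> (s * a)))) / of_nat q"
        by (simp only: v2 E)
      finally show ?thesis by simp
    qed
    have v4: "V4 (a, b) = (if a = s then cnj (Ev (\<phi> (inv \<pi> b))) / r else 0)" for a b
    proof -
      have "V4 (a, b) = (\<Sum>x\<in>UNIV. cnj (Ev (\<phi> (inv \<pi> b))) / (r * of_nat q) * Ev (\<phi> ((s - a) * x)))"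
      proof -
        have e: "cnj (Ev (\<phi> (a * x))) * Ev (\<phi> (s * x)) = Ev (\<phi> ((s - a) * x))" for x
        proof -
          have "(s - a) * x = - (a * x) + s * x" by (simp add: algebra_simps)
          then show ?thesis by (simp only: Evp_add[OF L] Evp_minus[OF L])
        qed
        show ?thesis unfolding V4_def
          by (auto simp: v3 Fe cr intro!: sum.cong simp flip: e)
      qed
      also have "\<dots> = cnj (Ev (\<phi> (inv \<pi> b))) / (r * of_nat q) * (\<Sum>x\<in>UNIV. Ev (\<phi> ((s - a) * x)))"
        by (simp add: sum_distrib_left)
      also have "\<dots> = (if a = s then cnj (Ev (\<phi> (inv \<pi> b))) / r else 0)"
      proof (cases "a = s")
        case True
        then show ?thesis using qpos by (simp add: phi_0[OF L] Ev_zero q_def)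
      next
        case False
        then show ?thesis using char_sum[OF L assms(2), of "s - a"] by simp
      qed
      finally show ?thesis .
    qed
    have n4: "(cmod (V4 (s, b)))\<^sup>2 = 1 / real q" for b
    proof -
      have "cmod r = sqrt (real q)" by (simp add: r_def)
      then show ?thesis by (simp add: v4 norm_divide Ev_norm power_divide)
    qed
    have fin: "run_circuit \<phi> [Fdag_reg1] (black_box \<pi> s (run_circuit \<phi> [F_reg1, Fdag_reg2] (basis_state (0, 1)))) = V4"
      by (simp add: run_circuit_def V1_def V2_def V3_def V4_def)
    have set: "{z. fst z = s} = Pair s ` (UNIV :: 'a set)" by auto
    have "(\<Sum>z\<in>{z. fst z = s}. (cmod (V4 z))\<^sup>2) = (\<Sum>b\<in>(UNIV :: 'a set). (cmod (V4 (s, b)))\<^sup>2)"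
      unfolding set by (subst sum.reindex) (auto intro: inj_onI)
    also have "\<dots> = 1" using qpos by (simp add: n4 q_def)
    finally show "let final = run_circuit \<phi> [Fdag_reg1] (black_box \<pi> s (run_circuit \<phi> [F_reg1, Fdag_reg2] (basis_state (0, 1))))
         in (\<Sum>z\<in>{z. fst z = s}. (cmod (final z))\<^sup>2) = 1"
      by (simp only: fin Let_def)
  qed
qed

end
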